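(* For $k=2$, every initial store $IS\in\{\Box,\blacksquare\}^2$ and all $i,j\in\{1,2\}$, there is no correct compositional translation from $\mathrm{SYNCSIMPLE}$ into $\mathrm{LOCKSIMPLE}_{2,IS}$ of blocking type $(P_iP_i,P_jP_j)$.
   Context: $\mathrm{SYNCSIMPLE}$: subprocesses $\mathcal{U} ::= \checkmark \mid 0 \mid\, !\mathcal{U} \mid\, ?\mathcal{U}$; processes are finite parallel compositions $\mathcal{U}_1\mid\cdots\mid\mathcal{U}_n$ ($\mid$ associative, commutative, $0$ a unit). Reduction: $!\mathcal{U}_1\mid ?\mathcal{U}_2\mid \mathcal{P}\to \mathcal{U}_1\mid\mathcal{U}_2\mid\mathcal{P}$. Successful: of form $\checkmark\mid\mathcal{P}$; may-convergent: reduces to a successful process; must-convergent: every reachable process is may-convergent. $\mathrm{LOCKSIMPLE}_{k,IS}$ ($IS\in\{\Box,\blacksquare\}^k$, $\Box$ empty, $\blacksquare$ full): subprocesses are words over $\{P_1,T_1,\dots,P_k,T_k\}$ followed by $0$ or $\checkmark$; states $(\mathcal{P},C)$ reduce by $(P_i\mathcal{U}\mid\mathcal{P},C)\to(\mathcal{U}\mid\mathcal{P},C[C_i:=\blacksquare])$ only if $C_i=\Box$, and $(T_i\mathcal{U}\mid\mathcal{P},C)\to(\mathcal{U}\mid\mathcal{P},C[C_i:=\Box])$ always. Success = process contains $\checkmark$; a process $\mathcal{P}$ is may/must-convergent iff the state $(\mathcal{P},IS)$ is. A compositional translation $\tau$ is given by words $\tau(!),\tau(?)$ with $\tau(0)=0$,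 $\tau(\checkmark)=\checkmark$, $\tau(!\mathcal{U})=\tau(!)\tau(\mathcal{U})$, $\tau(?\mathcal{U})=\tau(?)\tau(\mathcal{U})$, $\tau$ commuting with $\mid$; correct = preserves and reflects may- and must-convergence. Blocking type: for a word $S$, run $S$ as a single subprocess from $IS$; if it gets stuck at an occurrence of $P_i$, that occurrence ends the blocking prefix; if it is the first symbol from $\{P_i,T_i\}$ in $S$ (prefix $RP_i$, $R$ without $P_i,T_i$) the blocking type is $P_i$, otherwise the prefix has form $R_1P_iR_2P_i$, $R_2$ without $P_i,T_i$, and the blocking type is $P_iP_i$. $\tau$ has blocking type $(W_1,W_2)$ if $\tau(!)$ has type $W_1$ and $\tau(?)$ type $W_2$. *)

theory Defs
  imports "HOL-Library.Multiset"
begin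

datatype ssub = SCheck | SZero | SSend ssub | SRecv ssub

type_synonym sproc = "ssub multiset"

inductive sync_step :: "sproc \<Rightarrow> sproc \<Rightarrow> bool" where
  "sync_step ({#SSend u1, SRecv u2#} + P) ({#u1, u2#} + P)"

definition sync_successful :: "sproc \<Rightarrow> bool" where
  "sync_successful P \<longleftrightarrow> SCheck \<in># P"

definition may_conv :: "('a \<Rightarrow> 'a \<Rightarrow> bool) \<Rightarrow> ('a \<Rightarrow> bool) \<Rightarrow> 'a \<Rightarrow> bool" where
  "may_conv step succ x \<longleftrightarrow> (\<exists>y. step\<^sup>*\<^sup>* x y \<and> succ y)"

definition must_conv :: "('a \<Rightarrow> 'a \<Rightarrow> bool) \<Rightarrow> ('a \<Rightarrow> bool) \<Rightarrow> 'a \<Rightarrow> bool" where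
  "must_conv step succ x \<longleftrightarrow> (\<forall>y. step\<^sup>*\<^sup>* x y \<longrightarrow> may_conv step succ y)"

text \<open>Symbols P_i and T_i, indices 1..k. A store is a list of booleans of length k;
  entry i-1 is True iff lock i is full.\<close>

datatype lsym = P nat | T nat

fun sym_idx :: "lsym \<Rightarrow> nat" where
  "sym_idx (P i) = i" | "sym_idx (T i) = i"

definition wf_word :: "nat \<Rightarrow> lsym list \<Rightarrow> bool" where
  "wf_word k w \<longleftrightarrow> (\<forall>s \<in> set w. 1 \<le> sym_idx s \<and> sym_idx s \<le> k)"

datatype lend = LZero | LCheck

type_synonym lsub = "lsym list \<times> lend"
type_synonym lproc = "lsub multiset"
type_synonym lstate = "lproc \<times> bool list"

inductive lock_step :: "lstate \<Rightarrow> lstate \<Rightarrow> bool" where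
  lockP: "\<lbrakk>1 \<le> i; i \<le> length C; \<not> C ! (i - 1)\<rbrakk> \<Longrightarrow>
     lock_step ({#(P i # w, e)#} + Q, C) ({#(w, e)#} + Q, C[i - 1 := True])"
| lockT: "\<lbrakk>1 \<le> i; i \<le> length C\<rbrakk> \<Longrightarrow>
     lock_step ({#(T i # w, e)#} + Q, C) ({#(w, e)#} + Q, C[i - 1 := False])"

text \<open>Success: the process has a check at top level (i.e. of the form check | Q).\<close>
definition lock_successful :: "lstate \<Rightarrow> bool" where
  "lock_successful S \<longleftrightarrow> ([], LCheck) \<in># fst S"

fun tr_sub :: "lsym list \<Rightarrow> lsym list \<Rightarrow> ssub \<Rightarrow> lsub" where
  "tr_sub ws wr SCheck = ([], LCheck)"
| "tr_sub ws wr SZero = ([], LZero)"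
| "tr_sub ws wr (SSend u) = (ws @ fst (tr_sub ws wr u), snd (tr_sub ws wr u))"
| "tr_sub ws wr (SRecv u) = (wr @ fst (tr_sub ws wr u), snd (tr_sub ws wr u))"

definition tr_proc :: "lsym list \<Rightarrow> lsym list \<Rightarrow> sproc \<Rightarrow> lproc" where
  "tr_proc ws wr M = image_mset (tr_sub ws wr) M"

definition correct_translation :: "bool list \<Rightarrow> lsym list \<Rightarrow> lsym list \<Rightarrow> bool" where
  "correct_translation IS ws wr \<longleftrightarrow>
     (\<forall>M. (may_conv sync_step sync_successful M \<longleftrightarrow>
            may_conv lock_step lock_successful (tr_proc ws wr M, IS))
        \<and> (must_conv sync_step sync_successful M \<longleftrightarrow>
            must_conv lock_step lock_successful (tr_proc ws wr M, IS)))"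

fun stuck_pos :: "bool list \<Rightarrow> lsym list \<Rightarrow> nat option" where
  "stuck_pos C [] = None"
| "stuck_pos C (P i # w) =
     (if C ! (i - 1) then Some 0 else map_option Suc (stuck_pos (C[i - 1 := True]) w))"
| "stuck_pos C (T i # w) = map_option Suc (stuck_pos (C[i - 1 := False]) w)"

datatype btype = BP nat | BPP nat

definition has_btype :: "bool list \<Rightarrow> lsym list \<Rightarrow> btype \<Rightarrow> bool" where
  "has_btype IS S b \<longleftrightarrow>
     (case b of
        BP i \<Rightarrow> (\<exists>R rest. S = R @ [P i] @ rest \<and> (\<forall>x \<in> set R. x \<noteq> P i \<and> x \<noteq> T i)
                   \<and> stuck_pos IS S = Some (length R))
      | BPP i \<Rightarrow> (\<exists>R1 R2 rest. S = R1 @ [P i] @ R2 @ [P i] @ rest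
                   \<and> (\<forall>x \<in> set R2. x \<noteq> P i \<and> x \<noteq> T i)
                   \<and> stuck_pos IS S = Some (length R1 + 1 + length R2)))"

end

theory Submission
  imports Defs
begin

fun nxt :: "nat \<Rightarrow> lsym list \<Rightarrow> lsym option" where
  "nxt l [] = None"
| "nxt l (s # w) = (if sym_idx s = l then Some s else nxt l w)"

definition hasPP :: "nat \<Rightarrow> lsym list \<Rightarrow> bool" where
  "hasPP l w \<longleftrightarrow> (\<exists>u v. w = u @ P l # v \<and> nxt l v = Some (P l))"

definition ostep :: "bool list \<Rightarrow> lsym list \<Rightarrow> bool list \<Rightarrow> lsym list \<Rightarrow> bool" where
  "ostep C w C' w' \<longleftrightarrow>
     (\<exists>i. w = P i # w' \<and> 1 \<le> i \<and> i \<le> length C \<and> \<not> C ! (i - 1) \<and> C' = C[i - 1 := True])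
   \<or> (\<exists>i. w = T i # w' \<and> 1 \<le> i \<and> i \<le> length C \<and> C' = C[i - 1 := False])"

type_synonym tst = "lsym list \<times> lsym list \<times> bool list"

fun tstep :: "tst \<Rightarrow> tst \<Rightarrow> bool" where
  "tstep (a, b, C) (a', b', C') \<longleftrightarrow>
     (ostep C a C' a' \<and> b' = b) \<or> (ostep C b C' b' \<and> a' = a)"

definition Dead :: "tst \<Rightarrow> bool" where
  "Dead s \<longleftrightarrow> (\<forall>a' b' C'. tstep\<^sup>*\<^sup>* s (a', b', C') \<longrightarrow> a' \<noteq> [])"

definition reachdead :: "tst \<Rightarrow> bool" where
  "reachdead s \<longleftrightarrow> (\<exists>s'. tstep\<^sup>*\<^sup>* s s' \<and> Dead s')"

abbreviation ms :: "lsym list \<Rightarrow> lsym list \<Rightarrow> lproc" where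
  "ms a b \<equiv> {#(a, LCheck), (b, LZero)#}"

lemma add_mset_eq_two:
  "add_mset x Q = {#y, z#} \<Longrightarrow> (x = y \<and> Q = {#z#}) \<or> (x = z \<and> Q = {#y#})"
  by (auto simp: add_eq_conv_ex)

lemma lock_step_ms:
  assumes "lock_step (ms a b, C) S'"
  shows "\<exists>a' b' C'. S' = (ms a' b', C') \<and> tstep (a, b, C) (a', b', C')"
  using assms
proof cases
  case (lockP i w e Q)
  from lockP(1) have "add_mset (P i # w, e) Q = {#(a, LCheck), (b, LZero)#}" by simp
  then have "((P i # w, e) = (a, LCheck) \<and> Q = {#(b, LZero)#}) \<or> ((P i # w, e) = (b, LZero) \<and> Q = {#(a, LCheck)#})"
    by (rule add_mset_eq_two)
  then show ?thesis
  proof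
    assume h: "(P i # w, e) = (a, LCheck) \<and> Q = {#(b, LZero)#}"
    then have "ostep C a (C[i - 1 := True]) w" using lockP unfolding ostep_def by auto
    then show ?thesis using h lockP by (intro exI[of _ w] exI[of _ b] exI[of _ "C[i - 1 := True]"]) auto
  next
    assume h: "(P i # w, e) = (b, LZero) \<and> Q = {#(a, LCheck)#}"
    then have "ostep C b (C[i - 1 := True]) w" using lockP unfolding ostep_def by auto
    then show ?thesis using h lockP by (intro exI[of _ a] exI[of _ w] exI[of _ "C[i - 1 := True]"]) auto
  qed
next
  case (lockT i w e Q)
  from lockT(1) have "add_mset (T i # w, e) Q = {#(a, LCheck), (b, LZero)#}" by simp
  then have "((T i # w, e) = (a, LCheck) \<and> Q = {#(b, LZero)#}) \<or> ((T i # w, e) = (b, LZero) \<and> Q = {#(a, LCheck)#})"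
    by (rule add_mset_eq_two)
  then show ?thesis
  proof
    assume h: "(T i # w, e) = (a, LCheck) \<and> Q = {#(b, LZero)#}"
    then have "ostep C a (C[i - 1 := False]) w" using lockT unfolding ostep_def by auto
    then show ?thesis using h lockT by (intro exI[of _ w] exI[of _ b] exI[of _ "C[i - 1 := False]"]) auto
  next
    assume h: "(T i # w, e) = (b, LZero) \<and> Q = {#(a, LCheck)#}"
    then have "ostep C b (C[i - 1 := False]) w" using lockT unfolding ostep_def by auto
    then show ?thesis using h lockT by (intro exI[of _ a] exI[of _ w] exI[of _ "C[i - 1 := False]"]) auto
  qed
qed

lemma ostep_lock_A:
  assumes "ostep C a C' a'"
  shows "lock_step (ms a b, C) (ms a' b, C')"
proof -
  from assms show ?thesis unfolding ostep_def
  proof (elim disjE exE conjE)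
    fix i assume "a = P i # a'" "1 \<le> i" "i \<le> length C" "\<not> C ! (i - 1)" "C' = C[i - 1 := True]"
    moreover have "{#(P i # a', LCheck)#} + {#(b, LZero)#} = ms (P i # a') b"
      "{#(a', LCheck)#} + {#(b, LZero)#} = ms a' b" by (simp_all add: add_mset_commute)
    ultimately show ?thesis using lock_step.lockP[of i C a' LCheck "{#(b, LZero)#}"] by metis
  next
    fix i assume "a = T i # a'" "1 \<le> i" "i \<le> length C" "C' = C[i - 1 := False]"
    moreover have "{#(T i # a', LCheck)#} + {#(b, LZero)#} = ms (T i # a') b"
      "{#(a', LCheck)#} + {#(b, LZero)#} = ms a' b" by (simp_all add: add_mset_commute)
    ultimately show ?thesis using lock_step.lockT[of i C a' LCheck "{#(b, LZero)#}"] by metis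
  qed
qed

lemma ostep_lock_B:
  assumes "ostep C b C' b'"
  shows "lock_step (ms a b, C) (ms a b', C')"
proof -
  have e1: "ms a b = add_mset (b, LZero) {#(a, LCheck)#}" by simp
  have e2: "ms a b' = add_mset (b', LZero) {#(a, LCheck)#}" by simp
  from assms show ?thesis unfolding ostep_def e1 e2
  proof (elim disjE exE conjE)
    fix i assume "b = P i # b'" "1 \<le> i" "i \<le> length C" "\<not> C ! (i - 1)" "C' = C[i - 1 := True]"
    then show "lock_step (add_mset (b, LZero) {#(a, LCheck)#}, C) (add_mset (b', LZero) {#(a, LCheck)#}, C')"
    proof -
      have "{#(P i # b', LZero)#} + {#(a, LCheck)#} = add_mset (b, LZero) {#(a, LCheck)#}"
        "{#(b', LZero)#} + {#(a, LCheck)#} = add_mset (b', LZero) {#(a, LCheck)#}"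
        using \<open>b = P i # b'\<close> by (simp_all add: add_mset_commute)
      then show ?thesis using lock_step.lockP[of i C b' LZero "{#(a, LCheck)#}"] \<open>1 \<le> i\<close> \<open>i \<le> length C\<close> \<open>\<not> C ! (i - 1)\<close> \<open>C' = C[i - 1 := True]\<close> by metis
    qed
  next
    fix i assume "b = T i # b'" "1 \<le> i" "i \<le> length C" "C' = C[i - 1 := False]"
    then show "lock_step (add_mset (b, LZero) {#(a, LCheck)#}, C) (add_mset (b', LZero) {#(a, LCheck)#}, C')"
    proof -
      have "{#(T i # b', LZero)#} + {#(a, LCheck)#} = add_mset (b, LZero) {#(a, LCheck)#}"
        "{#(b', LZero)#} + {#(a, LCheck)#} = add_mset (b', LZero) {#(a, LCheck)#}"
        using \<open>b = T i # b'\<close> by (simp_all add: add_mset_commute)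
      then show ?thesis using lock_step.lockT[of i C b' LZero "{#(a, LCheck)#}"] \<open>1 \<le> i\<close> \<open>i \<le> length C\<close> \<open>C' = C[i - 1 := False]\<close> by metis
    qed
  qed
qed

lemma tstep_lock:
  assumes "tstep (a, b, C) (a', b', C')"
  shows "lock_step (ms a b, C) (ms a' b', C')"
  using assms ostep_lock_A ostep_lock_B by auto

lemma tsteps_lock:
  assumes "tstep\<^sup>*\<^sup>* s s'"
  shows "lock_step\<^sup>*\<^sup>* (ms (fst s) (fst (snd s)), snd (snd s)) (ms (fst s') (fst (snd s')), snd (snd s'))"
  using assms
proof induction
  case base
  then show ?case by simp
next
  case (step y z)
  obtain a b C where y: "y = (a, b, C)" by (cases y) auto
  obtain a' b' C' where z: "z = (a', b', C')" by (cases z) auto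
  from step(2) have "lock_step (ms a b, C) (ms a' b', C')" unfolding y z by (rule tstep_lock)
  with step(3) show ?case unfolding y z by simp
qed

lemma lock_steps_ms:
  assumes "lock_step\<^sup>*\<^sup>* (ms a b, C) S"
  shows "\<exists>a' b' C'. S = (ms a' b', C') \<and> tstep\<^sup>*\<^sup>* (a, b, C) (a', b', C')"
  using assms
proof induction
  case base
  then show ?case by blast
next
  case (step y z)
  then obtain a' b' C' where y: "y = (ms a' b', C')" and r: "tstep\<^sup>*\<^sup>* (a, b, C) (a', b', C')" by blast
  from step(2) y obtain a'' b'' C'' where zz: "z = (ms a'' b'', C'')" "tstep (a', b', C') (a'', b'', C'')"
    using lock_step_ms by blast
  from r zz(2) have "tstep\<^sup>*\<^sup>* (a, b, C) (a'', b'', C'')" by (rule rtranclp.rtrancl_into_rtrancl)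
  with zz(1) show ?case by blast
qed

lemma Dead_not_may:
  assumes "Dead (a, b, C)"
  shows "\<not> may_conv lock_step lock_successful (ms a b, C)"
proof
  assume "may_conv lock_step lock_successful (ms a b, C)"
  then obtain z where z: "lock_step\<^sup>*\<^sup>* (ms a b, C) z" "lock_successful z" unfolding may_conv_def by blast
  from lock_steps_ms[OF z(1)] obtain a' b' C' where "z = (ms a' b', C')" "tstep\<^sup>*\<^sup>* (a, b, C) (a', b', C')" by blast
  with z(2) assms show False unfolding lock_successful_def Dead_def by auto
qed

lemma reachdead_not_must:
  assumes "reachdead (a, b, C)"
  shows "\<not> must_conv lock_step lock_successful (ms a b, C)"
proof -
  from assms obtain s' where s': "tstep\<^sup>*\<^sup>* (a, b, C) s'" "Dead s'" unfolding reachdead_def by blast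
  obtain a' b' C' where e: "s' = (a', b', C')" by (cases s') auto
  from tsteps_lock[OF s'(1)] have "lock_step\<^sup>*\<^sup>* (ms a b, C) (ms a' b', C')" unfolding e by simp
  moreover have "\<not> may_conv lock_step lock_successful (ms a' b', C')" using Dead_not_may s'(2) e by simp
  ultimately show ?thesis unfolding must_conv_def by blast
qed


lemma nxt_append_none: "(\<forall>s\<in>set u. sym_idx s \<noteq> l) \<Longrightarrow> nxt l (u @ v) = nxt l v"
  by (induction u) auto

lemma nxt_append_some: "nxt l u \<noteq> None \<Longrightarrow> nxt l (u @ v) = nxt l u"
  by (induction u) auto

lemma nxt_SomeD: "nxt l w = Some s \<Longrightarrow> sym_idx s = l"
  by (induction w) (auto split: if_splits)

lemma nxt_Nil_None: "nxt l [] = None" by simp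

lemma sym_idx_cases: "sym_idx s = l \<Longrightarrow> s = P l \<or> s = T l"
  by (cases s) auto

lemma hasPP_Cons: "hasPP l (s # w) \<longleftrightarrow> hasPP l w \<or> (s = P l \<and> nxt l w = Some (P l))"
proof
  assume "hasPP l (s # w)"
  then obtain u v where uv: "s # w = u @ P l # v" "nxt l v = Some (P l)" unfolding hasPP_def by blast
  show "hasPP l w \<or> (s = P l \<and> nxt l w = Some (P l))"
  proof (cases u)
    case Nil
    then show ?thesis using uv by auto
  next
    case (Cons x u')
    then have "w = u' @ P l # v" using uv by simp
    then show ?thesis using uv unfolding hasPP_def by blast
  qed
next
  assume "hasPP l w \<or> (s = P l \<and> nxt l w = Some (P l))"
  then show "hasPP l (s # w)"
  proof
    assume "hasPP l w"
    then obtain u v where "w = u @ P l # v" "nxt l v = Some (P l)" unfolding hasPP_def by blast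
    then show ?thesis unfolding hasPP_def by (intro exI[of _ "s # u"] exI[of _ v]) simp
  next
    assume "s = P l \<and> nxt l w = Some (P l)"
    then show ?thesis unfolding hasPP_def by (intro exI[of _ "[]"] exI[of _ w]) simp
  qed
qed

lemma hasPP_ne: "hasPP l w \<Longrightarrow> w \<noteq> []"
  unfolding hasPP_def by auto

lemma hasPP_append_left: "hasPP l v \<Longrightarrow> hasPP l (u @ v)"
  unfolding hasPP_def by (metis append.assoc)

lemma hasPP_append_right: "hasPP l u \<Longrightarrow> hasPP l (u @ v)"
proof -
  assume "hasPP l u"
  then obtain x y where "u = x @ P l # y" "nxt l y = Some (P l)" unfolding hasPP_def by blast
  moreover from this have "nxt l (y @ v) = Some (P l)" using nxt_append_some by simp
  ultimately show ?thesis unfolding hasPP_def by (intro exI[of _ x] exI[of _ "y @ v"]) simp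
qed

fun en :: "bool list \<Rightarrow> lsym \<Rightarrow> bool" where
  "en C (P i) = (\<not> C ! (i - 1))"
| "en C (T i) = True"

fun upd :: "bool list \<Rightarrow> lsym \<Rightarrow> bool list" where
  "upd C (P i) = C[i - 1 := True]"
| "upd C (T i) = C[i - 1 := False]"

lemma ostep_en: "1 \<le> sym_idx s \<Longrightarrow> sym_idx s \<le> length C \<Longrightarrow> en C s \<Longrightarrow> ostep C (s # w) (upd C s) w"
  by (cases s) (auto simp: ostep_def)

lemma no_ostep: "\<not> en C s \<Longrightarrow> \<not> ostep C (s # w) C' w'"
  by (cases s) (auto simp: ostep_def)

lemma no_ostep_Nil: "\<not> ostep C [] C' w'"
  by (auto simp: ostep_def)

lemma length_upd[simp]: "length (upd C s) = length C"
  by (cases s) auto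

lemma upd_other: "sym_idx s \<noteq> l \<Longrightarrow> 1 \<le> sym_idx s \<Longrightarrow> 1 \<le> l \<Longrightarrow> upd C s ! (l - 1) = C ! (l - 1)"
  by (cases s) auto

lemma ostep_cases:
  assumes "ostep C w C' w'"
  shows "\<exists>s. w = s # w' \<and> en C s \<and> C' = upd C s \<and> 1 \<le> sym_idx s"
  using assms unfolding ostep_def
proof (elim disjE exE conjE)
  fix i assume "w = P i # w'" "1 \<le> i" "i \<le> length C" "\<not> C ! (i - 1)" "C' = C[i - 1 := True]"
  then show ?thesis by (intro exI[of _ "P i"]) simp
next
  fix i assume "w = T i # w'" "1 \<le> i" "i \<le> length C" "C' = C[i - 1 := False]"
  then show ?thesis by (intro exI[of _ "T i"]) simp
qed

definition Jf :: "nat \<Rightarrow> tst \<Rightarrow> bool" where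
  "Jf l s \<longleftrightarrow> (case s of (a, b, C) \<Rightarrow> C ! (l - 1) \<and> nxt l a = Some (P l) \<and> nxt l b \<noteq> Some (T l))"

lemma Jf_step:
  assumes l: "1 \<le> l" and J: "Jf l s" and st: "tstep s s'"
  shows "Jf l s'"
proof -
  obtain a b C where s: "s = (a, b, C)" by (cases s) auto
  obtain a' b' C' where s': "s' = (a', b', C')" by (cases s') auto
  from J have J1: "C ! (l - 1)" "nxt l a = Some (P l)" "nxt l b \<noteq> Some (T l)" unfolding s Jf_def by auto
  from st have "(ostep C a C' a' \<and> b' = b) \<or> (ostep C b C' b' \<and> a' = a)" unfolding s s' by simp
  then show ?thesis
  proof
    assume h: "ostep C a C' a' \<and> b' = b"
    then obtain x where x: "a = x # a'" "en C x" "C' = upd C x" "1 \<le> sym_idx x" using ostep_cases by blast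
    have "sym_idx x \<noteq> l"
    proof
      assume "sym_idx x = l"
      then have "nxt l a = Some x" using x by simp
      then have "x = P l" using J1 by simp
      then show False using x J1 by simp
    qed
    then have "nxt l a' = nxt l a" "C' ! (l - 1) = C ! (l - 1)" using x upd_other l by auto
    then show ?thesis unfolding s' Jf_def using J1 h by auto
  next
    assume h: "ostep C b C' b' \<and> a' = a"
    then obtain x where x: "b = x # b'" "en C x" "C' = upd C x" "1 \<le> sym_idx x" using ostep_cases by blast
    have "sym_idx x \<noteq> l"
    proof
      assume "sym_idx x = l"
      then have nx: "nxt l b = Some x" using x by simp
      from \<open>sym_idx x = l\<close> have "x = P l \<or> x = T l" by (rule sym_idx_cases)
      then show False using nx J1 x by auto
    qed
    then have "nxt l b' = nxt l b" "C' ! (l - 1) = C ! (l - 1)" using x upd_other l by auto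
    then show ?thesis unfolding s' Jf_def using J1 h by auto
  qed
qed

lemma Jf_Dead:
  assumes l: "1 \<le> l" and J: "Jf l s"
  shows "Dead s"
  unfolding Dead_def
proof (intro allI impI)
  fix a' b' C'
  assume "tstep\<^sup>*\<^sup>* s (a', b', C')"
  then have "Jf l (a', b', C')" using J
    by (induction rule: rtranclp_induct) (auto intro: Jf_step[OF l])
  then show "a' \<noteq> []" unfolding Jf_def by auto
qed

lemma term_Dead:
  assumes "\<And>s'. \<not> tstep s s'" and "fst s \<noteq> []"
  shows "Dead s"
  unfolding Dead_def
proof (intro allI impI)
  fix a' b' C'
  assume "tstep\<^sup>*\<^sup>* s (a', b', C')"
  then have "s = (a', b', C')" using assms(1) by (cases rule: converse_rtranclpE) auto
  then show "a' \<noteq> []" using assms(2) by auto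
qed

lemma reachdead_Dead: "Dead s \<Longrightarrow> reachdead s"
  unfolding reachdead_def by blast

lemma reachdead_step: "tstep s s' \<Longrightarrow> reachdead s' \<Longrightarrow> reachdead s"
  unfolding reachdead_def by (meson converse_rtranclp_into_rtranclp)

lemma reachdead_steps: "tstep\<^sup>*\<^sup>* s s' \<Longrightarrow> reachdead s' \<Longrightarrow> reachdead s"
  unfolding reachdead_def by (meson rtranclp_trans)

lemma wf_Cons: "wf_word 2 (s # w) \<longleftrightarrow> (1 \<le> sym_idx s \<and> sym_idx s \<le> 2) \<and> wf_word 2 w"
  unfolding wf_word_def by auto


definition Qst :: "nat \<Rightarrow> nat \<Rightarrow> lsym list \<Rightarrow> lsym list \<Rightarrow> bool list \<Rightarrow> bool" where
  "Qst \<mu> \<nu> a b C \<longleftrightarrow> (\<exists>a''. a = P \<nu> # a'') \<and> hasPP \<mu> a \<and> nxt \<mu> b = Some (T \<mu>)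
      \<and> (\<not> C ! (\<nu> - 1) \<or> nxt \<nu> b = Some (T \<nu>))"

lemma core:
  assumes mn: "(\<mu> = 1 \<and> \<nu> = 2) \<or> (\<mu> = 2 \<and> \<nu> = 1)"
  shows "length a + length b = n \<Longrightarrow> length C = 2 \<Longrightarrow> wf_word 2 a \<Longrightarrow> wf_word 2 b \<Longrightarrow>
     (hasPP \<mu> a \<and> nxt \<mu> b \<noteq> Some (T \<mu>)) \<or> Qst \<mu> \<nu> a b C \<Longrightarrow> reachdead (a, b, C)"
proof (induction n arbitrary: a b C rule: less_induct)
  case (less n a b C)
  have rec: "reachdead (a', b', C')"
    if "length a' + length b' < n" "length C' = 2" "wf_word 2 a'" "wf_word 2 b'"
       "(hasPP \<mu> a' \<and> nxt \<mu> b' \<noteq> Some (T \<mu>)) \<or> Qst \<mu> \<nu> a' b' C'" for a' b' C'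
    using less.IH[OF that(1) refl that(2-5)] .
  have lenC: "length C = 2" and wfa: "wf_word 2 a" and wfb: "wf_word 2 b" and len: "length a + length b = n"
    using less.prems by auto
  have mnf: "\<mu> \<noteq> \<nu>" "1 \<le> \<mu>" "\<mu> \<le> 2" "1 \<le> \<nu>" "\<nu> \<le> 2" using mn by auto
  have idx: "sym_idx s = \<mu> \<or> sym_idx s = \<nu>" if "1 \<le> sym_idx s" "sym_idx s \<le> 2" for s
    using that mn by auto
  have nthC: "C[k - 1 := x] ! (k - 1) = x" if "1 \<le> k" "k \<le> 2" for k x
    using that lenC by simp
  from less.prems(5) show ?case
  proof (elim disjE conjE)
    assume hPP: "hasPP \<mu> a" and nb: "nxt \<mu> b \<noteq> Some (T \<mu>)"
    from hasPP_ne[OF hPP] obtain sa a' where a: "a = sa # a'" by (cases a) auto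
    from wfa a have sa12: "1 \<le> sym_idx sa" "sym_idx sa \<le> 2" and wfa': "wf_word 2 a'" by (auto simp: wf_Cons)
    show ?thesis
    proof (cases "\<exists>s b'. b = s # b' \<and> sym_idx s = \<nu> \<and> en C s")
      case True
      then obtain s b' where b: "b = s # b'" "sym_idx s = \<nu>" "en C s" by blast
      from wfb b have wfb': "wf_word 2 b'" by (auto simp: wf_Cons)
      have st: "tstep (a, b, C) (a, b', upd C s)"
        using ostep_en[of s C b'] b mnf lenC by simp
      have "nxt \<mu> b' = nxt \<mu> b" using b mnf by simp
      then have "reachdead (a, b', upd C s)"
        using rec[of a b' "upd C s"] len b lenC wfa wfb' hPP nb by simp
      then show ?thesis using reachdead_step[OF st] by blast
    next
      case noB: False
      show ?thesis
      proof (cases "en C sa")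
        case True
        have st: "tstep (a, b, C) (a', b, upd C sa)"
          using ostep_en[of sa C a'] a sa12 True lenC by simp
        show ?thesis
        proof (cases "hasPP \<mu> a'")
          case True
          then have "reachdead (a', b, upd C sa)"
            using rec[of a' b "upd C sa"] len a lenC wfa' wfb nb by simp
          then show ?thesis using reachdead_step[OF st] by blast
        next
          case False
          with hPP a have sP: "sa = P \<mu>" "nxt \<mu> a' = Some (P \<mu>)" using hasPP_Cons by auto
          have "Jf \<mu> (a', b, upd C sa)" unfolding Jf_def using sP nb nthC mnf by simp
          then have "Dead (a', b, upd C sa)" using Jf_Dead mnf by blast
          then show ?thesis using reachdead_step[OF st] reachdead_Dead by blast
        qed
      next
        case notenA: False
        then obtain k where sak: "sa = P k" "C ! (k - 1)" by (cases sa) auto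
        have k12: "k = \<mu> \<or> k = \<nu>" using idx[of sa] sa12 sak by simp
        then show ?thesis
        proof
          assume "k = \<mu>"
          then have "Jf \<mu> (a, b, C)" unfolding Jf_def using a sak nb by simp
          then show ?thesis using Jf_Dead mnf reachdead_Dead by blast
        next
          assume kn: "k = \<nu>"
          show ?thesis
          proof (cases "\<exists>s b'. b = s # b' \<and> en C s")
            case False
            have "\<not> tstep (a, b, C) s'" for s'
            proof
              assume "tstep (a, b, C) s'"
              then obtain a'' b'' C'' where s': "s' = (a'', b'', C'')" 
                "(ostep C a C'' a'' \<and> b'' = b) \<or> (ostep C b C'' b'' \<and> a'' = a)" by (cases s') auto
              then show False
              proof (elim disjE conjE)
                assume "ostep C a C'' a''"
                then show False using no_ostep[OF notenA] a by simp
              next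
                assume "ostep C b C'' b''"
                then show False using False no_ostep_Nil no_ostep by (cases b) auto
              qed
            qed
            then have "Dead (a, b, C)" using term_Dead[of "(a, b, C)"] a by simp
            then show ?thesis by (rule reachdead_Dead)
          next
            case True
            then obtain s b' where b: "b = s # b'" "en C s" by blast
            from wfb b have s12: "1 \<le> sym_idx s" "sym_idx s \<le> 2" and wfb': "wf_word 2 b'" by (auto simp: wf_Cons)
            have "sym_idx s \<noteq> \<nu>" using noB b by blast
            then have sm: "sym_idx s = \<mu>" using idx[OF s12] by blast
            then have "nxt \<mu> b = Some s" using b by simp
            then have sP: "s = P \<mu>" using nb sym_idx_cases[OF sm] by auto
            have nxtnu: "nxt \<nu> b = nxt \<nu> b'" using b sm mnf by simp
            show ?thesis
            proof (cases "nxt \<nu> b' = Some (T \<nu>)")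
              case False
              have "Jf \<nu> (a, b, C)" unfolding Jf_def using a sak kn nxtnu False by simp
              then show ?thesis using Jf_Dead mnf reachdead_Dead by blast
            next
              case nbT: True
              have st: "tstep (a, b, C) (a, b', upd C s)"
                using ostep_en[of s C b'] b s12 lenC by simp
              have "reachdead (a, b', upd C s)"
              proof (cases "nxt \<mu> b' = Some (T \<mu>)")
                case False
                then show ?thesis using rec[of a b' "upd C s"] len b lenC wfa wfb' hPP by simp
              next
                case True
                have "Qst \<mu> \<nu> a b' (upd C s)" unfolding Qst_def using a sak kn hPP True nbT by simp
                then show ?thesis using rec[of a b' "upd C s"] len b lenC wfa wfb' by simp
              qed
              then show ?thesis using reachdead_step[OF st] by blast
            qed
          qed
        qed
      qed
    qed
  next
    assume Q: "Qst \<mu> \<nu> a b C"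
    then obtain a'' where a: "a = P \<nu> # a''" and hPP: "hasPP \<mu> a" and nbm: "nxt \<mu> b = Some (T \<mu>)"
      and qc: "\<not> C ! (\<nu> - 1) \<or> nxt \<nu> b = Some (T \<nu>)" unfolding Qst_def by blast
    from nbm obtain s b' where b: "b = s # b'" by (cases b) auto
    from wfb b have s12: "1 \<le> sym_idx s" "sym_idx s \<le> 2" and wfb': "wf_word 2 b'" by (auto simp: wf_Cons)
    from idx[OF s12] show ?thesis
    proof
      assume sm: "sym_idx s = \<mu>"
      then have "nxt \<mu> b = Some s" using b by simp
      then have sT: "s = T \<mu>" using nbm by simp
      have st: "tstep (a, b, C) (a, b', upd C s)"
        using ostep_en[of s C b'] b s12 lenC sT by simp
      have c1: "upd C s ! (\<nu> - 1) = C ! (\<nu> - 1)" using upd_other[of s \<nu> C] sm mnf s12 by simp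
      have c2: "nxt \<nu> b' = nxt \<nu> b" using b sm mnf by simp
      have "reachdead (a, b', upd C s)"
      proof (cases "nxt \<mu> b' = Some (T \<mu>)")
        case False
        then show ?thesis using rec[of a b' "upd C s"] len b lenC wfa wfb' hPP by simp
      next
        case True
        have "Qst \<mu> \<nu> a b' (upd C s)" unfolding Qst_def using a hPP True c1 c2 qc by simp
        then show ?thesis using rec[of a b' "upd C s"] len b lenC wfa wfb' by simp
      qed
      then show ?thesis using reachdead_step[OF st] by blast
    next
      assume sn: "sym_idx s = \<nu>"
      have c3: "nxt \<mu> b' = nxt \<mu> b" using b sn mnf by simp
      from sym_idx_cases[OF sn] show ?thesis
      proof
        assume sT: "s = T \<nu>"
        have st: "tstep (a, b, C) (a, b', upd C s)"
          using ostep_en[of s C b'] b s12 lenC sT by simp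
        have "\<not> upd C s ! (\<nu> - 1)" using sT nthC mnf by simp
        then have "Qst \<mu> \<nu> a b' (upd C s)" unfolding Qst_def using a hPP nbm c3 by simp
        then have "reachdead (a, b', upd C s)" using rec[of a b' "upd C s"] len b lenC wfa wfb' by simp
        then show ?thesis using reachdead_step[OF st] by blast
      next
        assume sP: "s = P \<nu>"
        then have "nxt \<nu> b = Some (P \<nu>)" using b by simp
        then have free: "\<not> C ! (\<nu> - 1)" using qc by auto
        have st: "tstep (a, b, C) (a, b', upd C s)"
          using ostep_en[of s C b'] b s12 lenC sP free by simp
        have full: "upd C s ! (\<nu> - 1)" using sP nthC mnf by simp
        show ?thesis
        proof (cases "nxt \<nu> b' = Some (T \<nu>)")
          case True
          have "Qst \<mu> \<nu> a b' (upd C s)" unfolding Qst_def using a hPP nbm c3 True by simp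
          then have "reachdead (a, b', upd C s)" using rec[of a b' "upd C s"] len b lenC wfa wfb' by simp
          then show ?thesis using reachdead_step[OF st] by blast
        next
          case False
          have "Jf \<nu> (a, b', upd C s)" unfolding Jf_def using a full False by simp
          then have "Dead (a, b', upd C s)" using Jf_Dead mnf by blast
          then show ?thesis using reachdead_step[OF st] reachdead_Dead by blast
        qed
      qed
    qed
  qed
qed

lemma Nprime:
  fixes \<mu> \<nu> :: nat
  assumes "(\<mu> = 1 \<and> \<nu> = 2) \<or> (\<mu> = 2 \<and> \<nu> = 1)" "length C = 2" "wf_word 2 a" "wf_word 2 b"
    "hasPP \<mu> a" "nxt \<mu> b \<noteq> Some (T \<mu>)"
  shows "reachdead (a, b, C)"
  using core[OF assms(1) refl assms(2-4)] assms(5,6) by blast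

lemma Klemma:
  assumes "length C = 2" "wf_word 2 a" "wf_word 2 b" "hasPP 1 a" "hasPP 2 a"
  shows "reachdead (a, b, C)"
  using assms
proof (induction b arbitrary: C)
  case Nil
  then show ?case using Nprime[of 1 2 C a "[]"] by simp
next
  case (Cons s b)
  show ?case
  proof (cases "nxt 1 (s # b) = Some (T 1)")
    case False
    then show ?thesis using Nprime[of 1 2 C a "s # b"] Cons.prems by simp
  next
    case T1: True
    show ?thesis
    proof (cases "nxt 2 (s # b) = Some (T 2)")
      case False
      then show ?thesis using Nprime[of 2 1 C a "s # b"] Cons.prems by simp
    next
      case T2: True
      from Cons.prems have s12: "1 \<le> sym_idx s" "sym_idx s \<le> 2" and wfb: "wf_word 2 b" by (auto simp: wf_Cons)
      have sT: "s = T (sym_idx s)"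
      proof -
        have "sym_idx s = 1 \<or> sym_idx s = 2" using s12 by auto
        then show ?thesis using T1 T2 by (cases s) (auto split: if_splits)
      qed
      have st: "tstep (a, s # b, C) (a, b, upd C s)"
        using ostep_en[of s C b] s12 Cons.prems(1) sT by (cases s) auto
      have "reachdead (a, b, upd C s)" using Cons.IH[of "upd C s"] Cons.prems wfb by simp
      then show ?thesis using reachdead_step[OF st] by blast
    qed
  qed
qed


lemma solo:
  "stuck_pos C w = Some n \<Longrightarrow> wf_word 2 w \<Longrightarrow> length C = 2 \<Longrightarrow>
   \<exists>C'. tstep\<^sup>*\<^sup>* (a, w, C) (a, drop n w, C') \<and> length C' = 2"
proof (induction w arbitrary: C n)
  case Nil
  then show ?case by simp
next
  case (Cons s w)
  from Cons.prems have s12: "1 \<le> sym_idx s" "sym_idx s \<le> 2" and wfw: "wf_word 2 w" by (auto simp: wf_Cons)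
  show ?case
  proof (cases s)
    case (P i)
    show ?thesis
    proof (cases "C ! (i - 1)")
      case True
      then have "n = 0" using Cons.prems P by simp
      then show ?thesis using Cons.prems by auto
    next
      case False
      then obtain m where m: "stuck_pos (C[i - 1 := True]) w = Some m" "n = Suc m"
        using Cons.prems P by auto
      have st: "tstep (a, s # w, C) (a, w, C[i - 1 := True])"
        using ostep_en[of s C w] P False s12 Cons.prems by simp
      from Cons.IH[OF m(1) wfw] Cons.prems obtain C' where
        "tstep\<^sup>*\<^sup>* (a, w, C[i - 1 := True]) (a, drop m w, C')" "length C' = 2" by auto
      moreover have "tstep\<^sup>*\<^sup>* (a, s # w, C) (a, drop m w, C')"
        using converse_rtranclp_into_rtranclp[of tstep, OF st calculation(1)] .
      ultimately show ?thesis using m(2) by auto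
    qed
  next
    case (T i)
    then obtain m where m: "stuck_pos (C[i - 1 := False]) w = Some m" "n = Suc m"
      using Cons.prems by auto
    have st: "tstep (a, s # w, C) (a, w, C[i - 1 := False])"
      using ostep_en[of s C w] T s12 Cons.prems by simp
    from Cons.IH[OF m(1) wfw] Cons.prems obtain C' where
      "tstep\<^sup>*\<^sup>* (a, w, C[i - 1 := False]) (a, drop m w, C')" "length C' = 2" by auto
    moreover have "tstep\<^sup>*\<^sup>* (a, s # w, C) (a, drop m w, C')"
      using converse_rtranclp_into_rtranclp[of tstep, OF st calculation(1)] .
    ultimately show ?thesis using m(2) by auto
  qed
qed

lemma btype_hasPP:
  assumes "has_btype IS w (BPP i)"
  shows "hasPP i w"
proof -
  from assms obtain R1 R2 rest where w: "w = R1 @ [P i] @ R2 @ [P i] @ rest"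
    and r2: "\<forall>x\<in>set R2. x \<noteq> P i \<and> x \<noteq> T i" unfolding has_btype_def by auto
  have "\<forall>x\<in>set R2. sym_idx x \<noteq> i" using r2 sym_idx_cases by blast
  then have "nxt i (R2 @ [P i] @ rest) = Some (P i)" using nxt_append_none by simp
  then show ?thesis unfolding hasPP_def w by (intro exI[of _ R1] exI[of _ "R2 @ [P i] @ rest"]) simp
qed

lemma btype_solo:
  assumes "has_btype IS w (BPP j)" "wf_word 2 w" "length IS = 2"
  shows "\<exists>C' rest. tstep\<^sup>*\<^sup>* (a, w, IS) (a, P j # rest, C') \<and> length C' = 2 \<and> wf_word 2 (P j # rest)"
proof -
  from assms obtain R1 R2 rest where w: "w = R1 @ [P j] @ R2 @ [P j] @ rest"
    and sp: "stuck_pos IS w = Some (length R1 + 1 + length R2)" unfolding has_btype_def by auto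
  from solo[OF sp assms(2,3)] obtain C' where
    "tstep\<^sup>*\<^sup>* (a, w, IS) (a, drop (length R1 + 1 + length R2) w, C')" "length C' = 2" by blast
  moreover have "drop (length R1 + 1 + length R2) w = P j # rest" unfolding w by simp
  moreover have "wf_word 2 (P j # rest)" using assms(2) unfolding w wf_word_def by auto
  ultimately show ?thesis by auto
qed

lemma sync_two:
  assumes "sync_step {#x, y#} M'"
  shows "\<exists>u1 u2. ((x = SSend u1 \<and> y = SRecv u2) \<or> (y = SSend u1 \<and> x = SRecv u2)) \<and> M' = {#u1, u2#}"
  using assms
proof cases
  case (1 u1 u2 Q)
  from 1(1) have e: "add_mset (SSend u1) (add_mset (SRecv u2) Q) = {#x, y#}" by simp
  then have "size (add_mset (SSend u1) (add_mset (SRecv u2) Q)) = size {#x, y#}" by simp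
  then have Q: "Q = {#}" by simp
  from e[unfolded Q] have "add_mset (SSend u1) {#SRecv u2#} = add_mset x {#y#}" by simp
  then have "(SSend u1 = x \<and> SRecv u2 = y) \<or> (SSend u1 = y \<and> SRecv u2 = x)"
    by (auto simp: add_eq_conv_ex)
  then show ?thesis using 1(2) Q by auto
qed

lemma sync_U_must:
  "must_conv sync_step sync_successful {#SSend (SRecv SCheck), SRecv (SSend SZero)#}"
proof -
  define U where "U = {#SSend (SRecv SCheck), SRecv (SSend SZero)#}"
  define U1 where "U1 = {#SRecv SCheck, SSend SZero#}"
  define U2 where "U2 = {#SZero, SCheck#}"
  have s1: "sync_step U U1" unfolding U_def U1_def
    using sync_step.intros[of "SRecv SCheck" "SSend SZero" "{#}"] by simp
  have s2: "sync_step U1 U2" unfolding U1_def U2_def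
    using sync_step.intros[of "SZero" "SCheck" "{#}"] by (simp add: add_mset_commute)
  have t1: "sync_step U M' \<Longrightarrow> M' = U1" for M' unfolding U_def U1_def by (auto dest!: sync_two)
  have t2: "sync_step U1 M' \<Longrightarrow> M' = U2" for M' unfolding U1_def U2_def by (auto dest!: sync_two)
  have t3: "\<not> sync_step U2 M'" for M' unfolding U2_def by (auto dest!: sync_two)
  have reach: "M \<in> {U, U1, U2}" if "sync_step\<^sup>*\<^sup>* U M" for M
    using that by induction (auto dest: t1 t2 simp: t3)
  have succ: "sync_successful U2" unfolding U2_def sync_successful_def by simp
  have may: "may_conv sync_step sync_successful M" if "M \<in> {U, U1, U2}" for M
  proof -
    have "sync_step\<^sup>*\<^sup>* M U2" using that s1 s2 by auto
    then show ?thesis unfolding may_conv_def using succ by blast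
  qed
  show ?thesis unfolding must_conv_def U_def[symmetric] using reach may by blast
qed

lemma sync_Y_must:
  "must_conv sync_step sync_successful {#SSend SCheck, SRecv SZero#}"
proof -
  define Y where "Y = {#SSend SCheck, SRecv SZero#}"
  define Y1 where "Y1 = {#SCheck, SZero#}"
  have s1: "sync_step Y Y1" unfolding Y_def Y1_def
    using sync_step.intros[of "SCheck" "SZero" "{#}"] by simp
  have t1: "sync_step Y M' \<Longrightarrow> M' = Y1" for M' unfolding Y_def Y1_def by (auto dest!: sync_two)
  have t2: "\<not> sync_step Y1 M'" for M' unfolding Y1_def by (auto dest!: sync_two)
  have reach: "M \<in> {Y, Y1}" if "sync_step\<^sup>*\<^sup>* Y M" for M
    using that by induction (auto dest: t1 simp: t2)
  have succ: "sync_successful Y1" unfolding Y1_def sync_successful_def by simp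
  have may: "may_conv sync_step sync_successful M" if "M \<in> {Y, Y1}" for M
  proof -
    have "sync_step\<^sup>*\<^sup>* M Y1" using that s1 by auto
    then show ?thesis unfolding may_conv_def using succ by blast
  qed
  show ?thesis unfolding must_conv_def Y_def[symmetric] using reach may by blast
qed

theorem proposition5p9:
  fixes IS :: "bool list" and i j :: nat and ws wr :: "lsym list"
  assumes "length IS = 2"
    and "i \<in> {1, 2}" and "j \<in> {1, 2}"
    and "wf_word 2 ws" and "wf_word 2 wr"
    and "has_btype IS ws (BPP i)" and "has_btype IS wr (BPP j)"
  shows "\<not> correct_translation IS ws wr"
proof
  assume corr: "correct_translation IS ws wr"
  have hi: "hasPP i ws" using btype_hasPP assms(6) by blast
  have hj: "hasPP j wr" using btype_hasPP assms(7) by blast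
  show False
  proof (cases "i = j")
    case True
    define M where "M = {#SSend SCheck, SRecv SZero#}"
    have trM: "tr_proc ws wr M = ms ws wr" unfolding M_def tr_proc_def by simp
    from corr have "must_conv sync_step sync_successful M \<longleftrightarrow> must_conv lock_step lock_successful (tr_proc ws wr M, IS)"
      unfolding correct_translation_def by blast
    then have "must_conv lock_step lock_successful (ms ws wr, IS)"
      using sync_Y_must unfolding M_def[symmetric] trM by blast
    moreover have "reachdead (ws, wr, IS)"
    proof -
      from btype_solo[OF assms(7) assms(5) assms(1)] obtain C' rest where
        r: "tstep\<^sup>*\<^sup>* (ws, wr, IS) (ws, P j # rest, C')" "length C' = 2"
        and wfr: "wf_word 2 (P j # rest)" by blast
      have "reachdead (ws, P j # rest, C')"
        using Nprime[of i "3 - i" C' ws "P j # rest"] assms(2) r(2) assms(4) wfr hi True by auto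
      then show ?thesis using reachdead_steps[OF r(1)] by blast
    qed
    ultimately show False using reachdead_not_must by blast
  next
    case False
    define M where "M = {#SSend (SRecv SCheck), SRecv (SSend SZero)#}"
    have trM: "tr_proc ws wr M = ms (ws @ wr) (wr @ ws)" unfolding M_def tr_proc_def by simp
    from corr have "must_conv sync_step sync_successful M \<longleftrightarrow> must_conv lock_step lock_successful (tr_proc ws wr M, IS)"
      unfolding correct_translation_def by blast
    then have "must_conv lock_step lock_successful (ms (ws @ wr) (wr @ ws), IS)"
      using sync_U_must unfolding M_def[symmetric] trM by blast
    moreover have "reachdead (ws @ wr, wr @ ws, IS)"
    proof -
      have "hasPP i (ws @ wr)" "hasPP j (ws @ wr)"
        using hasPP_append_right[OF hi] hasPP_append_left[OF hj] by auto
      then have "hasPP 1 (ws @ wr)" "hasPP 2 (ws @ wr)" using assms(2,3) False by auto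
      moreover have "wf_word 2 (ws @ wr)" "wf_word 2 (wr @ ws)" using assms(4,5) unfolding wf_word_def by auto
      ultimately show ?thesis using Klemma assms(1) by blast
    qed
    ultimately show False using reachdead_not_must by blast
  qed
qed

end
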